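(* Let $\sigma,\tau$ be $d$-dimensional signatures on a connected graph $G$ with $\sigma\cong\tau$ via a switching map $f:V\to\mathsf{O}(d)$. Then for any distinct $i,j\in V$, $$F_{ij}\,\mathcal{C}^\sigma(i,j)=\mathcal{C}^\tau(i,j)\,F_{ij},\qquad F_{ij}=\begin{bmatrix}f(i)&0_{d\times d}\\0_{d\times d}&f(j)\end{bmatrix}.$$
   Context: $G=(V,E,W)$ is a finite connected weighted graph, $w_{xy}>0$ iff $\{x,y\}\in E$, $\deg(x)=\sum_y w_{xy}$. A $d$-dimensional signature maps oriented edges to $\mathsf{O}(d)$ with $\sigma_{yx}=\sigma_{xy}^{\mathrm T}$. $\sigma\cong\tau$ via $f$ means $f(x)\sigma_{xy}=\tau_{xy}f(y)$ for every oriented edge $(x,y)$. The connection Laplacian $\mathcal{L}^\sigma$ is the $nd\times nd$ block matrix with blocks $\deg(x)I_d$ on the diagonal, $-w_{xy}\sigma_{xy}$ for $x\sim y$, $0$ otherwise. For $M=\begin{bmatrix}A&B\\C&D\end{bmatrix}$, $M/D=A-BD^\dagger C$. The conductance matrix is $\mathcal{C}^\sigma(i,j)=\mathcal{L}^\sigma/\mathcal{L}^\sigma_{\{i,j\}^c,\{i,j\}^c}\in\mathbb{R}^{2d\times2d}$, blocks ordered $i$ then $j$. *)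

theory Defs
  imports "HOL-Analysis.Analysis"
begin

text \<open>Weighted graphs on a finite vertex type 'v: weights w x y, with
  w x y > 0 iff x and y are adjacent (no loops).\<close>

definition weighted_graph :: "('v::finite \<Rightarrow> 'v \<Rightarrow> real) \<Rightarrow> bool" where
  "weighted_graph w \<longleftrightarrow> (\<forall>x y. w x y = w y x) \<and> (\<forall>x y. 0 \<le> w x y) \<and> (\<forall>x. w x x = 0)"

definition graph_connected :: "('v \<Rightarrow> 'v \<Rightarrow> real) \<Rightarrow> bool" where
  "graph_connected w \<longleftrightarrow> (\<forall>x y. (\<lambda>a b. 0 < w a b)\<^sup>*\<^sup>* x y)"

definition deg :: "('v::finite \<Rightarrow> 'v \<Rightarrow> real) \<Rightarrow> 'v \<Rightarrow> real" where
  "deg w x = (\<Sum>y\<in>UNIV. w x y)"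

text \<open>A d-dimensional signature (d = CARD('d)): orthogonal matrices on oriented edges,
  with sigma y x = transpose (sigma x y).\<close>

definition signature :: "('v \<Rightarrow> 'v \<Rightarrow> real) \<Rightarrow> ('v \<Rightarrow> 'v \<Rightarrow> real^'d^'d) \<Rightarrow> bool" where
  "signature w \<sigma> \<longleftrightarrow> (\<forall>x y. 0 < w x y \<longrightarrow>
      orthogonal_matrix (\<sigma> x y) \<and> \<sigma> y x = transpose (\<sigma> x y))"

definition switching_equiv ::
  "('v \<Rightarrow> 'v \<Rightarrow> real) \<Rightarrow> ('v \<Rightarrow> 'v \<Rightarrow> real^'d^'d) \<Rightarrow> ('v \<Rightarrow> 'v \<Rightarrow> real^'d^'d)
     \<Rightarrow> ('v \<Rightarrow> real^'d^'d) \<Rightarrow> bool" where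
  "switching_equiv w \<sigma> \<tau> f \<longleftrightarrow> (\<forall>x. orthogonal_matrix (f x)) \<and>
      (\<forall>x y. 0 < w x y \<longrightarrow> f x ** \<sigma> x y = \<tau> x y ** f y)"

text \<open>Matrices indexed by a finite index type, with explicit index sets for blocks.\<close>

type_synonym 'i mat = "'i \<Rightarrow> 'i \<Rightarrow> real"

definition mmul :: "'i set \<Rightarrow> 'i mat \<Rightarrow> 'i mat \<Rightarrow> 'i mat" where
  "mmul K A B = (\<lambda>p q. \<Sum>k\<in>K. A p k * B k q)"

definition is_pinv :: "'i set \<Rightarrow> 'i mat \<Rightarrow> 'i mat \<Rightarrow> bool" where
  "is_pinv T D X \<longleftrightarrow>
     (\<forall>p q. p \<notin> T \<or> q \<notin> T \<longrightarrow> X p q = 0) \<and>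
     (\<forall>p\<in>T. \<forall>q\<in>T. mmul T (mmul T D X) D p q = D p q) \<and>
     (\<forall>p\<in>T. \<forall>q\<in>T. mmul T (mmul T X D) X p q = X p q) \<and>
     (\<forall>p\<in>T. \<forall>q\<in>T. mmul T D X p q = mmul T D X q p) \<and>
     (\<forall>p\<in>T. \<forall>q\<in>T. mmul T X D p q = mmul T X D q p)"

definition pinv :: "'i set \<Rightarrow> 'i mat \<Rightarrow> 'i mat" where
  "pinv T D = (THE X. is_pinv T D X)"

text \<open>Schur complement M/D where D is the block of M indexed by the complement of S;
  meaningful for p, q in S: (M/D) = A - B D^+ C.\<close>

definition schur :: "'i set \<Rightarrow> 'i mat \<Rightarrow> 'i mat" where
  "schur S M = (let T = - S; Dp = pinv T M in
     (\<lambda>p q. M p q - (\<Sum>k\<in>T. \<Sum>l\<in>T. M p k * Dp k l * M l q)))"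

definition conn_laplacian ::
  "('v::finite \<Rightarrow> 'v \<Rightarrow> real) \<Rightarrow> ('v \<Rightarrow> 'v \<Rightarrow> real^'d^'d) \<Rightarrow> ('v \<times> 'd) mat" where
  "conn_laplacian w \<sigma> = (\<lambda>(x, a) (y, b).
     if x = y then (if a = b then deg w x else 0)
     else if 0 < w x y then - w x y * (\<sigma> x y $ a $ b) else 0)"

definition pair_idx :: "'v \<Rightarrow> 'v \<Rightarrow> ('v \<times> 'd) set" where
  "pair_idx i j = {i, j} \<times> UNIV"

text \<open>Conductance matrix C(i,j) = L / L_{{i,j}^c,{i,j}^c}, a 2d x 2d matrix indexed by
  pair_idx i j (blocks i then j).\<close>

definition conductance ::
  "('v::finite \<Rightarrow> 'v \<Rightarrow> real) \<Rightarrow> ('v \<Rightarrow> 'v \<Rightarrow> real^'d^'d) \<Rightarrow> 'v \<Rightarrow> 'v \<Rightarrow> ('v \<times> 'd) mat" where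
  "conductance w \<sigma> i j = schur (pair_idx i j) (conn_laplacian w \<sigma>)"

definition blockdiag :: "('v \<Rightarrow> real^'d^'d) \<Rightarrow> 'v \<Rightarrow> 'v \<Rightarrow> ('v \<times> 'd) mat" where
  "blockdiag f i j = (\<lambda>(x, a) (y, b).
     if x = y \<and> (x = i \<or> x = j) then f x $ a $ b else 0)"

end

theory Submission
  imports Defs
begin


definition tm :: "('i::finite) mat \<Rightarrow> real^'i^'i" where
  "tm A = (\<chi> p q. A p q)"

definition Pr :: "('i::finite) set \<Rightarrow> real^'i^'i" where
  "Pr K = (\<chi> p q. if p = q \<and> p \<in> K then 1 else 0)"

lemma if_mult1: "(if P then (1::real) else 0) * x = (if P then x else 0)" by simp
lemma if_mult2: "x * (if P then (1::real) else 0) = (if P then x else 0)" by simp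

lemma sum_delta_K: "(\<Sum>k\<in>(UNIV::'i::finite set). if k = q then f k else (0::real)) = f q"
  by (simp add: sum.delta')

lemma Pr_left: "(Pr K ** A) $ p $ q = (if p \<in> K then A $ p $ q else 0)"
proof -
  have "(Pr K ** A) $ p $ q = (\<Sum>k\<in>UNIV. if k = p then (if p \<in> K then A $ k $ q else 0) else 0)"
    unfolding matrix_matrix_mult_def vec_lambda_beta by (rule sum.cong) (auto simp: Pr_def)
  then show ?thesis by (simp only: sum_delta_K)
qed

lemma Pr_right: "(A ** Pr K) $ p $ q = (if q \<in> K then A $ p $ q else 0)"
proof -
  have "(A ** Pr K) $ p $ q = (\<Sum>k\<in>UNIV. if k = q then (if q \<in> K then A $ p $ k else 0) else 0)"
    unfolding matrix_matrix_mult_def vec_lambda_beta by (rule sum.cong) (auto simp: Pr_def)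
  then show ?thesis by (simp only: sum_delta_K)
qed

lemma Pr_idem: "Pr K ** Pr K = Pr K"
  by (simp add: vec_eq_iff Pr_left) (simp add: Pr_def)

lemma Pr_transpose: "transpose (Pr K) = Pr K"
  by (simp add: vec_eq_iff transpose_def Pr_def)

lemma tm_nth: "tm A $ p $ q = A p q" by (simp add: tm_def)

lemma mmul_tm: "mmul K A B p q = (tm A ** Pr K ** tm B) $ p $ q"
proof -
  have "(tm A ** Pr K ** tm B) $ p $ q = (\<Sum>k\<in>UNIV. if k \<in> K then A p k * B k q else 0)"
    by (auto simp: matrix_matrix_mult_def[of "tm A ** Pr K"] Pr_right tm_nth intro!: sum.cong)
  then show ?thesis by (simp add: mmul_def sum.inter_restrict[symmetric])
qed

lemma tm_mmul: "tm (mmul K A B) = tm A ** Pr K ** tm B"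
  by (simp add: vec_eq_iff tm_nth mmul_tm)

lemma PAP: "(Pr K ** A ** Pr K) $ p $ q = (if p \<in> K \<and> q \<in> K then A $ p $ q else 0)"
  by (simp add: Pr_left Pr_right)

lemma on_block_eq: "(\<forall>p\<in>K. \<forall>q\<in>K. A $ p $ q = B $ p $ q) \<longleftrightarrow> Pr K ** A ** Pr K = Pr K ** B ** Pr K"
  by (auto simp: vec_eq_iff PAP)



lemma tm_lambda: "tm (\<lambda>p q. Y $ p $ q) = Y"
  by (simp add: tm_def vec_lambda_eta)

lemma pinv_char:
  fixes L :: "('i::finite) mat" and Y :: "real^'i^'i"
  assumes Y1: "Pr T ** Y ** Pr T = Y"
    and Y2: "Pr T ** tm L ** Pr T ** Y = Pr T"
    and Y3: "Y ** Pr T ** tm L ** Pr T = Pr T"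
  shows "tm (pinv T L) = Y"
proof -
  let ?P = "Pr T"
  have PP: "A ** ?P ** ?P = A ** ?P" for A :: "real^'i^'i"
    by (metis Pr_idem matrix_mul_assoc)
  have PY: "?P ** Y = Y" by (metis Y1 Pr_idem matrix_mul_assoc)
  have YP: "Y ** ?P = Y" by (metis Y1 Pr_idem matrix_mul_assoc)
  have PYg: "A ** ?P ** Y = A ** Y" for A :: "real^'i^'i" by (metis PY matrix_mul_assoc)
  have YPg: "A ** Y ** ?P = A ** Y" for A :: "real^'i^'i" by (metis YP matrix_mul_assoc)
  have Y2g: "A ** ?P ** tm L ** ?P ** Y = A ** ?P" for A :: "real^'i^'i" by (metis Y2 matrix_mul_assoc)
  have Y3g: "A ** Y ** ?P ** tm L ** ?P = A ** ?P" for A :: "real^'i^'i" by (metis Y3 matrix_mul_assoc)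
  note simps = matrix_mul_assoc Pr_idem PP PY Y2 Y3 Y2g Y3g tm_mmul tm_lambda
  have ex: "is_pinv T L (\<lambda>p q. Y $ p $ q)"
    unfolding is_pinv_def
  proof (intro conjI allI impI ballI)
    fix p q assume "p \<notin> T \<or> q \<notin> T"
    then show "Y $ p $ q = 0" using PAP[of T Y p q] Y1 by auto
  next
    fix p q assume pq: "p \<in> T" "q \<in> T"
    have "?P ** tm (mmul T (mmul T L (\<lambda>p q. Y $ p $ q)) L) ** ?P = ?P ** tm L ** ?P"
      by (simp add: simps)
    then show "mmul T (mmul T L (\<lambda>p q. Y $ p $ q)) L p q = L p q"
      using on_block_eq[of T "tm (mmul T (mmul T L (\<lambda>p q. Y $ p $ q)) L)" "tm L"] pq
      by (simp add: tm_nth)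
  next
    fix p q assume pq: "p \<in> T" "q \<in> T"
    have "?P ** tm (mmul T (mmul T (\<lambda>p q. Y $ p $ q) L) (\<lambda>p q. Y $ p $ q)) ** ?P = ?P ** Y ** ?P"
      by (simp add: simps)
    then show "mmul T (mmul T (\<lambda>p q. Y $ p $ q) L) (\<lambda>p q. Y $ p $ q) p q = Y $ p $ q"
      using on_block_eq[of T "tm (mmul T (mmul T (\<lambda>p q. Y $ p $ q) L) (\<lambda>p q. Y $ p $ q))" Y] pq
      by (simp add: tm_nth)
  next
    fix p q assume pq: "p \<in> T" "q \<in> T"
    have "mmul T L (\<lambda>p q. Y $ p $ q) p q = (?P ** tm (mmul T L (\<lambda>p q. Y $ p $ q)) ** ?P) $ p $ q"
      using pq by (simp add: PAP tm_nth)
    also have "\<dots> = ?P $ p $ q" by (simp add: simps)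
    finally have 1: "mmul T L (\<lambda>p q. Y $ p $ q) p q = ?P $ p $ q" .
    have "mmul T L (\<lambda>p q. Y $ p $ q) q p = (?P ** tm (mmul T L (\<lambda>p q. Y $ p $ q)) ** ?P) $ q $ p"
      using pq by (simp add: PAP tm_nth)
    also have "\<dots> = ?P $ q $ p" by (simp add: simps)
    finally have 2: "mmul T L (\<lambda>p q. Y $ p $ q) q p = ?P $ q $ p" .
    show "mmul T L (\<lambda>p q. Y $ p $ q) p q = mmul T L (\<lambda>p q. Y $ p $ q) q p"
      using 1 2 by (auto simp: Pr_def)
  next
    fix p q assume pq: "p \<in> T" "q \<in> T"
    have "mmul T (\<lambda>p q. Y $ p $ q) L p q = (?P ** tm (mmul T (\<lambda>p q. Y $ p $ q) L) ** ?P) $ p $ q"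
      using pq by (simp add: PAP tm_nth)
    also have "\<dots> = ?P $ p $ q" by (simp add: simps)
    finally have 1: "mmul T (\<lambda>p q. Y $ p $ q) L p q = ?P $ p $ q" .
    have "mmul T (\<lambda>p q. Y $ p $ q) L q p = (?P ** tm (mmul T (\<lambda>p q. Y $ p $ q) L) ** ?P) $ q $ p"
      using pq by (simp add: PAP tm_nth)
    also have "\<dots> = ?P $ q $ p" by (simp add: simps)
    finally have 2: "mmul T (\<lambda>p q. Y $ p $ q) L q p = ?P $ q $ p" .
    show "mmul T (\<lambda>p q. Y $ p $ q) L p q = mmul T (\<lambda>p q. Y $ p $ q) L q p"
      using 1 2 by (auto simp: Pr_def)
  qed
  have uniq: "X = (\<lambda>p q. Y $ p $ q)" if X: "is_pinv T L X" for X
  proof -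
    have X1: "?P ** tm X ** ?P = tm X"
      using X unfolding is_pinv_def by (auto simp: vec_eq_iff PAP tm_nth)
    have X2: "?P ** tm (mmul T (mmul T L X) L) ** ?P = ?P ** tm L ** ?P"
      using X unfolding is_pinv_def on_block_eq[symmetric] by (simp add: tm_nth)
    then have X2': "?P ** tm L ** ?P ** tm X ** ?P ** tm L ** ?P = ?P ** tm L ** ?P"
      by (simp add: simps)
    have "Y ** (?P ** tm L ** ?P ** tm X ** ?P ** tm L ** ?P) ** Y = Y ** (?P ** tm L ** ?P) ** Y"
      by (simp only: X2')
    then have "?P ** tm X ** ?P = Y"
      by (simp add: simps)
    then have "tm X = Y" using X1 by simp
    then show ?thesis using tm_nth[of X] by (intro ext) simp
  qed
  have "pinv T L = (\<lambda>p q. Y $ p $ q)"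
    unfolding pinv_def using ex uniq by blast
  then show ?thesis by (simp add: tm_lambda)
qed



lemma mat_sub_ldistrib: "(A::real^'n^'m) ** (B - C) = A ** B - A ** C"
  by (simp add: vec_eq_iff matrix_matrix_mult_def sum_subtractf right_diff_distrib)

lemma mat_sub_rdistrib: "((B::real^'n^'m) - C) ** A = B ** A - C ** A"
  by (simp add: vec_eq_iff matrix_matrix_mult_def sum_subtractf left_diff_distrib)

lemma mat_add_rdistrib: "((B::real^'n^'m) + C) ** A = B ** A + C ** A"
  by (simp add: vec_eq_iff matrix_matrix_mult_def sum.distrib distrib_right)

lemma Pr_vec: "(Pr K *v x) $ p = (if p \<in> K then x $ p else 0)"
proof -
  have "(Pr K *v x) $ p = (\<Sum>k\<in>UNIV. if k = p then (if p \<in> K then x $ k else 0) else 0)"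
    unfolding matrix_vector_mult_def vec_lambda_beta by (rule sum.cong) (auto simp: Pr_def)
  then show ?thesis by (simp only: sum_delta_K)
qed

lemma exists_Y:
  fixes L :: "('i::finite) mat"
  assumes inj: "\<And>x. (\<forall>p. p \<notin> T \<longrightarrow> x $ p = 0) \<Longrightarrow> (\<forall>p\<in>T. (tm L *v x) $ p = 0) \<Longrightarrow> x = 0"
  shows "\<exists>Y. Pr T ** Y ** Pr T = Y \<and> Pr T ** tm L ** Pr T ** Y = Pr T \<and> Y ** Pr T ** tm L ** Pr T = Pr T"
proof -
  let ?P = "Pr T"
  define K where "K = ?P ** tm L ** ?P + (mat 1 - ?P)"
  have "\<forall>x. K *v x = 0 \<longrightarrow> x = 0"
  proof (intro allI impI)
    fix x assume Kx: "K *v x = 0"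
    have Kxp: "(K *v x) $ p = (if p \<in> T then (tm L *v (?P *v x)) $ p else x $ p)" for p
      by (simp add: K_def matrix_vector_mult_add_rdistrib matrix_vector_mult_diff_rdistrib
          Pr_vec matrix_vector_mul_assoc[symmetric])
    have Kx0: "(K *v x) $ p = 0" for p using Kx by simp
    have out: "\<forall>p. p \<notin> T \<longrightarrow> x $ p = 0"
    proof (intro allI impI)
      fix p assume "p \<notin> T" then show "x $ p = 0" using Kxp[of p] Kx0[of p] by simp
    qed
    then have "?P *v x = x" by (simp add: vec_eq_iff Pr_vec)
    then have "\<forall>p\<in>T. (tm L *v x) $ p = 0"
    proof (intro ballI)
      fix p assume Px: "?P *v x = x" and "p \<in> T"
      then show "(tm L *v x) $ p = 0" using Kxp[of p] Kx0[of p] by (simp add: Px)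
    qed
    then show "x = 0" using inj out by blast
  qed
  then obtain B where BK: "B ** K = mat 1"
    using matrix_left_invertible_ker by blast
  then have KB: "K ** B = mat 1" using matrix_left_right_inverse by blast
  have PK: "?P ** K = ?P ** tm L ** ?P"
    by (simp add: K_def matrix_add_ldistrib mat_sub_ldistrib matrix_mul_assoc Pr_idem)
  have KP: "K ** ?P = ?P ** tm L ** ?P"
    by (simp add: K_def mat_add_rdistrib mat_sub_rdistrib matrix_mul_assoc[symmetric] Pr_idem)
  have BP: "B ** ?P = ?P ** B"
  proof -
    have "B ** ?P = B ** ?P ** (K ** B)" by (simp add: KB)
    also have "\<dots> = B ** (?P ** K) ** B" by (simp add: matrix_mul_assoc)
    also have "\<dots> = B ** (K ** ?P) ** B" by (simp add: PK KP)
    also have "\<dots> = (B ** K) ** ?P ** B" by (simp add: matrix_mul_assoc)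
    finally show ?thesis by (simp add: BK)
  qed
  define Y where "Y = ?P ** B"
  have "?P ** Y ** ?P = Y"
  proof -
    have "?P ** Y ** ?P = ?P ** ?P ** (B ** ?P)" by (simp add: Y_def matrix_mul_assoc)
    also have "\<dots> = ?P ** (?P ** B)" by (simp only: BP Pr_idem)
    finally show ?thesis by (simp add: Y_def matrix_mul_assoc Pr_idem)
  qed
  moreover have "?P ** tm L ** ?P ** Y = ?P"
  proof -
    have "?P ** tm L ** ?P ** Y = K ** ?P ** ?P ** B" by (simp add: Y_def KP matrix_mul_assoc)
    also have "\<dots> = K ** (?P ** ?P) ** B" by (simp only: matrix_mul_assoc)
    also have "\<dots> = K ** (?P ** B)" by (simp only: Pr_idem matrix_mul_assoc)
    also have "\<dots> = K ** B ** ?P" by (metis BP matrix_mul_assoc)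
    finally show ?thesis by (simp add: KB)
  qed
  moreover have "Y ** ?P ** tm L ** ?P = ?P"
  proof -
    have "Y ** ?P ** tm L ** ?P = ?P ** B ** (?P ** tm L ** ?P)" by (simp add: Y_def matrix_mul_assoc)
    also have "\<dots> = ?P ** B ** (K ** ?P)" by (simp only: KP)
    also have "\<dots> = ?P ** (B ** K) ** ?P" by (simp only: matrix_mul_assoc)
    finally show ?thesis by (simp add: BK Pr_idem)
  qed
  ultimately show ?thesis by blast
qed

lemma schur_tm:
  assumes "Pr (- S) ** tm (pinv (- S) M) ** Pr (- S) = tm (pinv (- S) M)"
  shows "tm (schur S M) = tm M - tm M ** tm (pinv (- S) M) ** tm M"
proof -
  let ?D = "pinv (- S) M"
  have "schur S M p q = M p q - mmul (- S) (mmul (- S) M ?D) M p q" for p q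
  proof -
    have "mmul (- S) (mmul (- S) M ?D) M p q = (\<Sum>l\<in>- S. \<Sum>k\<in>- S. M p k * ?D k l * M l q)"
      by (simp add: mmul_def sum_distrib_right)
    also have "\<dots> = (\<Sum>k\<in>- S. \<Sum>l\<in>- S. M p k * ?D k l * M l q)"
      by (rule sum.swap)
    finally show ?thesis by (simp add: schur_def Let_def)
  qed
  then have "tm (schur S M) = tm M - tm M ** Pr (- S) ** tm ?D ** Pr (- S) ** tm M"
    by (simp add: vec_eq_iff tm_nth mmul_tm tm_mmul)
  also have "tm M ** Pr (- S) ** tm ?D ** Pr (- S) ** tm M = tm M ** (Pr (- S) ** tm ?D ** Pr (- S)) ** tm M"
    by (simp add: matrix_mul_assoc)
  finally show ?thesis using assms by simp
qed



lemma orth_norm: "orthogonal_matrix (Q::real^'n^'n) \<Longrightarrow> norm (Q *v z) = norm z"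
  using orthogonal_transformation_matrix[of "\<lambda>x. Q *v x"] orthogonal_transformation_norm
  by (metis matrix_of_matrix_vector_mul matrix_vector_mul_linear)

lemma sum_UNIV_prod: "(\<Sum>p\<in>(UNIV::('a::finite \<times> 'b::finite) set). g p) = (\<Sum>u\<in>UNIV. \<Sum>a\<in>UNIV. g (u, a))"
  by (simp add: sum.cartesian_product)

lemma L_alt:
  assumes "weighted_graph w"
  shows "conn_laplacian w \<sigma> (u, a) (v, b) = (if u = v \<and> a = b then deg w u else 0) - w u v * \<sigma> u v $ a $ b"
proof -
  have "w u u = 0" "0 \<le> w u v" using assms by (auto simp: weighted_graph_def)
  then show ?thesis by (auto simp: conn_laplacian_def)
qed

lemma Lx:
  assumes "weighted_graph w"
  shows "(tm (conn_laplacian w \<sigma>) *v x) $ (u, a) =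
    deg w u * x $ (u, a) - (\<Sum>v\<in>UNIV. w u v * (\<sigma> u v *v (\<chi> b. x $ (v, b))) $ a)"
proof -
  have "(tm (conn_laplacian w \<sigma>) *v x) $ (u, a) =
     (\<Sum>v\<in>UNIV. \<Sum>b\<in>UNIV. ((if u = v \<and> a = b then deg w u else 0) - w u v * \<sigma> u v $ a $ b) * x $ (v, b))"
    by (simp add: matrix_vector_mult_def tm_nth sum_UNIV_prod L_alt[OF assms])
  also have "\<dots> = (\<Sum>v\<in>UNIV. \<Sum>b\<in>UNIV. (if u = v \<and> a = b then deg w u * x $ (v, b) else 0))
      - (\<Sum>v\<in>UNIV. \<Sum>b\<in>UNIV. w u v * (\<sigma> u v $ a $ b * x $ (v, b)))"
    by (simp add: left_diff_distrib sum_subtractf if_distrib[of "\<lambda>t. t * _"] mult.assoc cong: if_cong)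
  also have "(\<Sum>v\<in>UNIV. \<Sum>b\<in>UNIV. (if u = v \<and> a = b then deg w u * x $ (v, b) else 0)) = deg w u * x $ (u, a)"
  proof -
    have "(\<Sum>v\<in>UNIV. \<Sum>b\<in>UNIV. (if u = v \<and> a = b then deg w u * x $ (v, b) else 0))
        = (\<Sum>v\<in>UNIV. if v = u then (\<Sum>b\<in>UNIV. if b = a then deg w u * x $ (u, b) else 0) else 0)"
      by (rule sum.cong) auto
    then show ?thesis by (simp only: sum_delta_K)
  qed
  also have "(\<Sum>v\<in>UNIV. \<Sum>b\<in>UNIV. w u v * (\<sigma> u v $ a $ b * x $ (v, b)))
      = (\<Sum>v\<in>UNIV. w u v * (\<sigma> u v *v (\<chi> b. x $ (v, b))) $ a)"
    by (simp add: matrix_vector_mult_def sum_distrib_left)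
  finally show ?thesis .
qed



lemma lap_inj:
  fixes w :: "'v::finite \<Rightarrow> 'v \<Rightarrow> real" and \<sigma> :: "'v \<Rightarrow> 'v \<Rightarrow> real^'d^'d"
    and x :: "real^('v \<times> 'd)"
  assumes wg: "weighted_graph w" and conn: "graph_connected w" and sig: "signature w \<sigma>"
    and x0: "\<And>p. x $ p = 0 \<or> (tm (conn_laplacian w \<sigma>) *v x) $ p = 0"
    and xi: "\<And>a. x $ (i, a) = 0"
  shows "x = 0"
proof -
  define y where "y u = (\<chi> a. x $ (u, a))" for u
  have ws: "w u v = w v u" "0 \<le> w u v" for u v using wg by (auto simp: weighted_graph_def)
  have Lxy: "(tm (conn_laplacian w \<sigma>) *v x) $ (u, a) = deg w u * y u $ a - (\<Sum>v\<in>UNIV. w u v * (\<sigma> u v *v y v) $ a)" for u a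
    using Lx[OF wg, of \<sigma> x u a] by (simp add: y_def)
  define Q where "Q = (\<Sum>u\<in>UNIV. deg w u * (y u \<bullet> y u) - (\<Sum>v\<in>UNIV. w u v * (y u \<bullet> (\<sigma> u v *v y v))))"
  have rowu: "(\<Sum>a\<in>UNIV. y u $ a * (deg w u * y u $ a - (\<Sum>v\<in>UNIV. w u v * (\<sigma> u v *v y v) $ a)))
     = deg w u * (y u \<bullet> y u) - (\<Sum>v\<in>UNIV. w u v * (y u \<bullet> (\<sigma> u v *v y v)))" for u
  proof -
    have "(\<Sum>a\<in>UNIV. y u $ a * (deg w u * y u $ a - (\<Sum>v\<in>UNIV. w u v * (\<sigma> u v *v y v) $ a)))
      = (\<Sum>a\<in>UNIV. deg w u * (y u $ a * y u $ a)) - (\<Sum>a\<in>UNIV. \<Sum>v\<in>UNIV. w u v * (y u $ a * (\<sigma> u v *v y v) $ a))"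
      by (simp add: right_diff_distrib sum_subtractf sum_distrib_left mult.left_commute)
    also have "(\<Sum>a\<in>UNIV. \<Sum>v\<in>UNIV. w u v * (y u $ a * (\<sigma> u v *v y v) $ a))
       = (\<Sum>v\<in>UNIV. \<Sum>a\<in>UNIV. w u v * (y u $ a * (\<sigma> u v *v y v) $ a))"
      by (rule sum.swap)
    finally show ?thesis by (simp add: inner_vec_def sum_distrib_left)
  qed
  have "Q = (\<Sum>u\<in>UNIV. \<Sum>a\<in>UNIV. y u $ a * (tm (conn_laplacian w \<sigma>) *v x) $ (u, a))"
    unfolding Q_def Lxy rowu ..
  also have "\<dots> = 0"
    by (rule sum.neutral, rule ballI, rule sum.neutral) (use x0 in \<open>auto simp: y_def\<close>)
  finally have Q0: "Q = 0" .
  have trm: "w u v * (norm (y u - \<sigma> u v *v y v))\<^sup>2 =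
      w u v * (y u \<bullet> y u) - 2 * (w u v * (y u \<bullet> (\<sigma> u v *v y v))) + w u v * (y v \<bullet> y v)" for u v
  proof (cases "0 < w u v")
    case True
    then have "norm (\<sigma> u v *v y v) = norm (y v)"
      using sig orth_norm by (auto simp: signature_def)
    then have "(\<sigma> u v *v y v) \<bullet> (\<sigma> u v *v y v) = y v \<bullet> y v"
      by (metis power2_norm_eq_inner)
    then show ?thesis
      by (simp add: power2_norm_eq_inner inner_diff_left inner_diff_right inner_commute algebra_simps)
  next
    case False
    then have "w u v = 0" using ws(2)[of u v] by simp
    then show ?thesis by simp
  qed
  have S3: "(\<Sum>u\<in>UNIV. \<Sum>v\<in>UNIV. w u v * (y v \<bullet> y v)) = (\<Sum>u\<in>UNIV. deg w u * (y u \<bullet> y u))"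
  proof -
    have "(\<Sum>u\<in>UNIV. \<Sum>v\<in>UNIV. w u v * (y v \<bullet> y v)) = (\<Sum>v\<in>UNIV. \<Sum>u\<in>UNIV. w v u * (y v \<bullet> y v))"
      by (subst sum.swap) (simp add: ws(1))
    then show ?thesis by (simp add: deg_def sum_distrib_right)
  qed
  have "(\<Sum>u\<in>UNIV. \<Sum>v\<in>UNIV. w u v * (norm (y u - \<sigma> u v *v y v))\<^sup>2) = 2 * Q"
  proof -
    have S1: "(\<Sum>u\<in>UNIV. \<Sum>v\<in>UNIV. w u v * (y u \<bullet> y u)) = (\<Sum>u\<in>UNIV. deg w u * (y u \<bullet> y u))"
      by (simp add: deg_def sum_distrib_right)
    have "(\<Sum>u\<in>UNIV. \<Sum>v\<in>UNIV. w u v * (norm (y u - \<sigma> u v *v y v))\<^sup>2)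
      = (\<Sum>u\<in>UNIV. \<Sum>v\<in>UNIV. w u v * (y u \<bullet> y u)) - 2 * (\<Sum>u\<in>UNIV. \<Sum>v\<in>UNIV. w u v * (y u \<bullet> (\<sigma> u v *v y v)))
        + (\<Sum>u\<in>UNIV. \<Sum>v\<in>UNIV. w u v * (y v \<bullet> y v))"
      unfolding trm by (simp add: sum.distrib sum_subtractf sum_distrib_left)
    also have "\<dots> = 2 * Q" unfolding S1 S3 Q_def by (simp add: sum_subtractf)
    finally show ?thesis .
  qed
  then have sum0: "(\<Sum>u\<in>UNIV. \<Sum>v\<in>UNIV. w u v * (norm (y u - \<sigma> u v *v y v))\<^sup>2) = 0"
    using Q0 by simp
  have nn: "0 \<le> w u v * (norm (y u - \<sigma> u v *v y v))\<^sup>2" for u v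
    using ws(2)[of u v] by simp
  have each: "w u v * (norm (y u - \<sigma> u v *v y v))\<^sup>2 = 0" for u v
  proof -
    have "\<forall>u\<in>UNIV. (\<Sum>v\<in>UNIV. w u v * (norm (y u - \<sigma> u v *v y v))\<^sup>2) = 0"
      using sum0 by (subst sum_nonneg_eq_0_iff[symmetric]) (auto intro: sum_nonneg nn)
    then have "(\<Sum>v\<in>UNIV. w u v * (norm (y u - \<sigma> u v *v y v))\<^sup>2) = 0" by simp
    then show ?thesis using nn by (simp add: sum_nonneg_eq_0_iff)
  qed
  have edge: "norm (y u) = norm (y v)" if "0 < w u v" for u v
  proof -
    have "norm (y u - \<sigma> u v *v y v) = 0" using each[of u v] that by simp
    then have "y u = \<sigma> u v *v y v" by simp
    then show ?thesis using sig that orth_norm by (auto simp: signature_def)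
  qed
  have path: "norm (y i) = norm (y u)" for u
  proof -
    have "(\<lambda>a b. 0 < w a b)\<^sup>*\<^sup>* i u" using conn by (simp add: graph_connected_def)
    then show ?thesis
      by (induction rule: rtranclp_induct) (auto dest: edge)
  qed
  have "y i = 0" by (simp add: y_def vec_eq_iff xi)
  then have "y u = 0" for u using path[of u] by simp
  then show "x = 0"
    by (simp add: vec_eq_iff y_def)
qed



definition Fm :: "('v::finite \<Rightarrow> real^'d^'d) \<Rightarrow> real^('v \<times> 'd::finite)^('v \<times> 'd)" where
  "Fm f = (\<chi> p q. if fst p = fst q then f (fst p) $ snd p $ snd q else 0)"

lemma F_left: "(Fm f ** A) $ (u, a) $ q = (\<Sum>c\<in>UNIV. f u $ a $ c * A $ (u, c) $ q)"
proof -
  have "(Fm f ** A) $ (u, a) $ q = (\<Sum>v\<in>UNIV. if v = u then (\<Sum>c\<in>UNIV. f u $ a $ c * A $ (u, c) $ q) else 0)"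
    unfolding matrix_matrix_mult_def vec_lambda_beta sum_UNIV_prod by (rule sum.cong) (auto simp: Fm_def)
  then show ?thesis by (simp only: sum_delta_K)
qed

lemma F_right: "(A ** Fm f) $ p $ (v, b) = (\<Sum>c\<in>UNIV. A $ p $ (v, c) * f v $ c $ b)"
proof -
  have "(A ** Fm f) $ p $ (v, b) = (\<Sum>u\<in>UNIV. if u = v then (\<Sum>c\<in>UNIV. A $ p $ (v, c) * f v $ c $ b) else 0)"
    unfolding matrix_matrix_mult_def vec_lambda_beta sum_UNIV_prod by (rule sum.cong) (auto simp: Fm_def)
  then show ?thesis by (simp only: sum_delta_K)
qed

lemma Fm_nth: "Fm f $ (u, a) $ (v, b) = (if u = v then f u $ a $ b else 0)"
  by (simp add: Fm_def)

lemma Fm_mult: "Fm g ** Fm h = Fm (\<lambda>u. g u ** h u)"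
proof -
  have "(Fm g ** Fm h) $ (u, a) $ (v, b) = Fm (\<lambda>u. g u ** h u) $ (u, a) $ (v, b)" for u a v b
    unfolding F_left by (simp add: Fm_nth matrix_matrix_mult_def)
  then show ?thesis by (simp add: vec_eq_iff)
qed

lemma Fm_transpose: "transpose (Fm f) = Fm (\<lambda>u. transpose (f u))"
  by (auto simp: vec_eq_iff split_paired_All Fm_nth transpose_def)

lemma Fm_one: "Fm (\<lambda>u. mat 1) = mat 1"
  by (auto simp: vec_eq_iff split_paired_All Fm_nth mat_def)

lemma Fm_orth:
  assumes "\<And>u. orthogonal_matrix (f u)"
  shows "transpose (Fm f) ** Fm f = mat 1" "Fm f ** transpose (Fm f) = mat 1"
  using assms by (simp_all add: Fm_transpose Fm_mult orthogonal_matrix_def Fm_one)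

lemma Pr_Fm: "Pr (A \<times> UNIV) ** Fm f = Fm f ** Pr (A \<times> UNIV)"
  by (auto simp: vec_eq_iff split_paired_All Pr_left Pr_right Fm_nth)

definition Dg :: "('v::finite \<Rightarrow> 'v \<Rightarrow> real) \<Rightarrow> real^('v \<times> 'd::finite)^('v \<times> 'd)" where
  "Dg w = (\<chi> p q. if p = q then deg w (fst p) else 0)"

definition Wm :: "('v::finite \<Rightarrow> 'v \<Rightarrow> real) \<Rightarrow> ('v \<Rightarrow> 'v \<Rightarrow> real^'d^'d) \<Rightarrow> real^('v \<times> 'd::finite)^('v \<times> 'd)" where
  "Wm w \<sigma> = (\<chi> p q. w (fst p) (fst q) * \<sigma> (fst p) (fst q) $ snd p $ snd q)"

lemma L_split: "weighted_graph w \<Longrightarrow> tm (conn_laplacian w \<sigma>) = Dg w - Wm w \<sigma>"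
  by (auto simp: vec_eq_iff split_paired_All tm_nth L_alt Dg_def Wm_def)

lemma F_Dg: "Fm f ** Dg w = Dg w ** Fm f"
proof -
  have "(Fm f ** Dg w) $ (u, a) $ (v, b) = (Dg w ** Fm f) $ (u, a) $ (v, b)" for u a v b
  proof -
    have "(Fm f ** Dg w) $ (u, a) $ (v, b) = (\<Sum>c\<in>UNIV. if c = b then (if u = v then f u $ a $ b * deg w u else 0) else 0)"
      unfolding F_left by (rule sum.cong) (auto simp: Dg_def)
    moreover have "(Dg w ** Fm f) $ (u, a) $ (v, b) = (\<Sum>c\<in>UNIV. if c = a then (if u = v then deg w u * f v $ a $ b else 0) else 0)"
      unfolding F_right by (rule sum.cong) (auto simp: Dg_def)
    ultimately show ?thesis by (simp only: sum_delta_K) simp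
  qed
  then show ?thesis by (simp add: vec_eq_iff split_paired_All)
qed

lemma F_Wm:
  assumes "switching_equiv w \<sigma> \<tau> f" "weighted_graph w"
  shows "Fm f ** Wm w \<sigma> = Wm w \<tau> ** Fm f"
proof -
  have "(Fm f ** Wm w \<sigma>) $ (u, a) $ (v, b) = (Wm w \<tau> ** Fm f) $ (u, a) $ (v, b)" for u a v b
  proof -
    have 1: "(Fm f ** Wm w \<sigma>) $ (u, a) $ (v, b) = w u v * (f u ** \<sigma> u v) $ a $ b"
      unfolding F_left by (simp add: Wm_def matrix_matrix_mult_def sum_distrib_left mult_ac)
    have 2: "(Wm w \<tau> ** Fm f) $ (u, a) $ (v, b) = w u v * (\<tau> u v ** f v) $ a $ b"
      unfolding F_right by (simp add: Wm_def matrix_matrix_mult_def sum_distrib_left mult_ac)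
    show ?thesis
    proof (cases "0 < w u v")
      case True
      then show ?thesis using assms(1) 1 2 by (simp add: switching_equiv_def)
    next
      case False
      then have "w u v = 0" using assms(2) by (simp add: weighted_graph_def) (metis order_le_less)
      then show ?thesis using 1 2 by simp
    qed
  qed
  then show ?thesis by (simp add: vec_eq_iff split_paired_All)
qed



lemma conj_mult:
  assumes "transpose F ** F = mat 1"
  shows "(F ** A ** transpose F) ** (F ** B ** transpose F) = F ** (A ** B) ** transpose (F::real^'n^'n)"
proof -
  have "(F ** A ** transpose F) ** (F ** B ** transpose F) = F ** A ** (transpose F ** F) ** B ** transpose F"
    by (simp add: matrix_mul_assoc)
  also have "\<dots> = F ** (A ** B) ** transpose F" by (simp add: assms matrix_mul_assoc)
  finally show ?thesis .
qed

theorem proposition5p6: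
  fixes w :: "'v::finite \<Rightarrow> 'v \<Rightarrow> real"
    and \<sigma> \<tau> :: "'v \<Rightarrow> 'v \<Rightarrow> real^'d^'d"
    and f :: "'v \<Rightarrow> real^'d^'d"
    and i j :: 'v
  assumes "weighted_graph w" and "graph_connected w"
    and "signature w \<sigma>" and "signature w \<tau>"
    and "switching_equiv w \<sigma> \<tau> f"
    and "i \<noteq> j"
  shows "\<forall>p\<in>pair_idx i j. \<forall>q\<in>pair_idx i j.
     mmul (pair_idx i j) (blockdiag f i j) (conductance w \<sigma> i j) p q
   = mmul (pair_idx i j) (conductance w \<tau> i j) (blockdiag f i j) p q"
proof -
  note wg = assms(1) and conn = assms(2) and sig = assms(3) and sw = assms(5)
  define S :: "('v \<times> 'd) set" where "S = pair_idx i j"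
  define T where "T = - S"
  have S_eq: "S = {i, j} \<times> (UNIV :: 'd set)" by (simp add: S_def pair_idx_def)
  have T_eq: "T = (- {i, j}) \<times> (UNIV :: 'd set)" by (auto simp: T_def S_eq)
  let ?P = "Pr T"
  define F where "F = Fm f"
  define L\<sigma> where "L\<sigma> = tm (conn_laplacian w \<sigma>)"
  define L\<tau> where "L\<tau> = tm (conn_laplacian w \<tau>)"
  have orth: "\<And>u. orthogonal_matrix (f u)" using sw by (simp add: switching_equiv_def)
  have FTF: "transpose F ** F = mat 1" and FFT: "F ** transpose F = mat 1"
    using Fm_orth[OF orth] by (simp_all add: F_def)
  define cj where "cj X = F ** X ** transpose F" for X
  have cjm: "cj A ** cj B = cj (A ** B)" for A B
    unfolding cj_def by (rule conj_mult[OF FTF])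
  have FL: "F ** L\<sigma> = L\<tau> ** F"
    unfolding F_def L\<sigma>_def L\<tau>_def L_split[OF wg]
    by (simp add: mat_sub_ldistrib mat_sub_rdistrib F_Dg F_Wm[OF sw wg])
  have cjL: "cj L\<sigma> = L\<tau>"
    unfolding cj_def FL by (simp add: matrix_mul_assoc[symmetric] FFT)
  have PF: "?P ** F = F ** ?P" unfolding T_eq F_def by (rule Pr_Fm)
  have cjP: "cj ?P = ?P"
    unfolding cj_def PF[symmetric] by (simp add: matrix_mul_assoc[symmetric] FFT)
  have cj_sub: "cj (A - B) = cj A - cj B" for A B
    unfolding cj_def by (simp add: mat_sub_ldistrib mat_sub_rdistrib)
  have inj: "x = 0" if "\<forall>p. p \<notin> T \<longrightarrow> x $ p = 0" "\<forall>p\<in>T. (tm (conn_laplacian w \<sigma>) *v x) $ p = 0" for x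
  proof (rule lap_inj[OF wg conn sig])
    show "x $ p = 0 \<or> (tm (conn_laplacian w \<sigma>) *v x) $ p = 0" for p using that by blast
    show "x $ (i, a) = 0" for a using that(1) by (simp add: T_eq)
  qed
  obtain Y where Y1: "?P ** Y ** ?P = Y" and Y2: "?P ** L\<sigma> ** ?P ** Y = ?P" and Y3: "Y ** ?P ** L\<sigma> ** ?P = ?P"
    using exists_Y[of T "conn_laplacian w \<sigma>"] inj unfolding L\<sigma>_def by blast
  have Z1: "?P ** cj Y ** ?P = cj Y" by (metis cjP cjm Y1)
  have Z2: "?P ** L\<tau> ** ?P ** cj Y = ?P" by (metis cjP cjm Y2 cjL)
  have Z3: "cj Y ** ?P ** L\<tau> ** ?P = ?P" by (metis cjP cjm Y3 cjL)
  have pinv\<sigma>: "tm (pinv T (conn_laplacian w \<sigma>)) = Y"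
    by (rule pinv_char) (use Y1 Y2 Y3 in \<open>simp_all add: L\<sigma>_def\<close>)
  have pinv\<tau>: "tm (pinv T (conn_laplacian w \<tau>)) = cj Y"
    by (rule pinv_char) (use Z1 Z2 Z3 in \<open>simp_all add: L\<tau>_def\<close>)
  define C\<sigma> where "C\<sigma> = L\<sigma> - L\<sigma> ** Y ** L\<sigma>"
  have C\<sigma>: "tm (conductance w \<sigma> i j) = C\<sigma>"
    unfolding conductance_def C\<sigma>_def L\<sigma>_def
    using schur_tm[of S "conn_laplacian w \<sigma>"] pinv\<sigma> Y1 by (simp add: S_def T_def)
  have C\<tau>: "tm (conductance w \<tau> i j) = cj C\<sigma>"
  proof -
    have "tm (conductance w \<tau> i j) = L\<tau> - L\<tau> ** cj Y ** L\<tau>"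
      unfolding conductance_def L\<tau>_def
      using schur_tm[of S "conn_laplacian w \<tau>"] pinv\<tau> Z1 by (simp add: S_def T_def)
    also have "\<dots> = cj C\<sigma>" unfolding C\<sigma>_def cj_sub cjL[symmetric] cjm ..
    finally show ?thesis .
  qed
  have key: "F ** C\<sigma> = cj C\<sigma> ** F"
    unfolding cj_def by (simp add: matrix_mul_assoc[symmetric] FTF)
  have PS: "Pr S ** F = F ** Pr S" unfolding S_eq F_def by (rule Pr_Fm)
  have B1: "tm (blockdiag f i j) ** Pr S = F ** Pr S"
    by (auto simp: vec_eq_iff split_paired_All Pr_right tm_nth blockdiag_def F_def Fm_nth S_eq)
  have B2: "Pr S ** tm (blockdiag f i j) = Pr S ** F"
    by (auto simp: vec_eq_iff split_paired_All Pr_left tm_nth blockdiag_def F_def Fm_nth S_eq)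
  show ?thesis
  proof (intro ballI)
    fix p q :: "'v \<times> 'd" assume p: "p \<in> pair_idx i j" and q: "q \<in> pair_idx i j"
    have "mmul (pair_idx i j) (blockdiag f i j) (conductance w \<sigma> i j) p q
        = (tm (blockdiag f i j) ** Pr S ** C\<sigma>) $ p $ q"
      by (simp add: mmul_tm C\<sigma> S_def)
    also have "\<dots> = (Pr S ** (F ** C\<sigma>)) $ p $ q"
      by (simp add: B1 PS[symmetric] matrix_mul_assoc)
    also have "\<dots> = (F ** C\<sigma>) $ p $ q" using p by (simp add: Pr_left S_def)
    also have "\<dots> = (cj C\<sigma> ** F) $ p $ q" by (simp add: key)
    also have "\<dots> = ((cj C\<sigma> ** F) ** Pr S) $ p $ q" using q by (simp add: Pr_right S_def)
    also have "\<dots> = (cj C\<sigma> ** Pr S ** tm (blockdiag f i j)) $ p $ q"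
      by (metis B2 PS matrix_mul_assoc)
    also have "\<dots> = mmul (pair_idx i j) (conductance w \<tau> i j) (blockdiag f i j) p q"
      by (simp add: mmul_tm C\<tau> S_def)
    finally show "mmul (pair_idx i j) (blockdiag f i j) (conductance w \<sigma> i j) p q
   = mmul (pair_idx i j) (conductance w \<tau> i j) (blockdiag f i j) p q" .
  qed
qed


end
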